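(* Let $D\subset\Phi^+$ be an orthogonal subset with $D\cap\mathcal C_1=\{\varepsilon_1-\varepsilon_j\}$ for some $1<j\le n$. Let $\tilde\Phi^+$ be the set of roots of $\Phi^+$ involving neither $\varepsilon_1$ nor $\varepsilon_j$ (i.e. $\tilde\Phi^+=\Phi^+\setminus(\mathcal C_1\cup\mathcal C_j\cup\mathcal R_j\cup\mathcal R_{-j})$), $\tilde D=D\cap\tilde\Phi^+$, $\tilde\sigma=\prod_{\beta\in\tilde D}r_\beta$, and $l'(\tilde\sigma)=\#\{\alpha\in\tilde\Phi^+:\tilde\sigma(\alpha)\notin\tilde\Phi^+\}$ (the length of $\tilde\sigma$ in the Weyl group of the root system $\tilde\Phi=\tilde\Phi^+\cup-\tilde\Phi^+$, which has the same type as $\Phi$ and rank $n-2$). Then $l(\sigma)=l'(\tilde\sigma)+|S(\varepsilon_1-\varepsilon_j)|+1$.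
   Context: Let $\Phi$ be a root system of type $B_n$, $C_n$ or $D_n$ in $\mathbb R^n$ with standard basis $\varepsilon_1,\dots,\varepsilon_n$ and positive roots $\Phi^+=\{\varepsilon_i\pm\varepsilon_j:1\le i<j\le n\}\cup\Phi_1^+$, where $\Phi_1^+=\emptyset$ for $D_n$, $\{\varepsilon_i\}$ for $B_n$, $\{2\varepsilon_i\}$ for $C_n$. $D\subset\Phi^+$ is orthogonal if its roots are pairwise orthogonal. $r_\beta$ denotes the reflection in the hyperplane orthogonal to $\beta$, $\sigma=\prod_{\beta\in D}r_\beta$, and $l(\sigma)=\#\{\alpha\in\Phi^+:\sigma(\alpha)\in-\Phi^+\}$ (the length of $\sigma$ in the Weyl group). $\mathrm{col}(\varepsilon_i\pm\varepsilon_j)=\mathrm{col}(\varepsilon_i)=\mathrm{col}(2\varepsilon_i)=i$; $\mathrm{row}(\varepsilon_i\pm\varepsilon_j)=\mp j$, $\mathrm{row}(\varepsilon_i)=0$, $\mathrm{row}(2\varepsilon_i)=-i$; $\mathcal R_i=\{\alpha\in\Phi^+:\mathrm{row}(\alpha)=i\}$, $\mathcal C_j=\{\alpha\in\Phi^+:\mathrm{col}(\alpha)=j\}$. For $\beta\in\Phi^+$, $S(\beta)=\{\alpha\in\Phi^+:\beta-\alpha\in\Phi^+\}$. *)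

theory Defs
  imports Complex_Main "HOL-Library.Function_Algebras"
begin

text \<open>Vectors of R^n are modelled as functions nat => real; only the coordinates
  1..n are relevant (all roots vanish outside {1..n}).\<close>

datatype rtype = TypeB | TypeC | TypeD

type_synonym vec = "nat \<Rightarrow> real"

definition eps :: "nat \<Rightarrow> vec" where
  "eps i = (\<lambda>k. if k = i then 1 else 0)"

datatype rlabel = Minus nat nat | Plus nat nat | Short nat | Long nat

fun rvec :: "rlabel \<Rightarrow> vec" where
  "rvec (Minus i j) = eps i - eps j"
| "rvec (Plus i j) = eps i + eps j"
| "rvec (Short i) = eps i"
| "rvec (Long i) = 2 * eps i"

fun rcol :: "rlabel \<Rightarrow> nat" where
  "rcol (Minus i j) = i"
| "rcol (Plus i j) = i"
| "rcol (Short i) = i"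
| "rcol (Long i) = i"

fun rrow :: "rlabel \<Rightarrow> int" where
  "rrow (Minus i j) = int j"
| "rrow (Plus i j) = - int j"
| "rrow (Short i) = 0"
| "rrow (Long i) = - int i"

definition pos_labels :: "rtype \<Rightarrow> nat \<Rightarrow> rlabel set" where
  "pos_labels t n =
     {Minus i j | i j. 1 \<le> i \<and> i < j \<and> j \<le> n}
   \<union> {Plus i j | i j. 1 \<le> i \<and> i < j \<and> j \<le> n}
   \<union> (case t of TypeD \<Rightarrow> {}
        | TypeB \<Rightarrow> {Short i | i. 1 \<le> i \<and> i \<le> n}
        | TypeC \<Rightarrow> {Long i | i. 1 \<le> i \<and> i \<le> n})"

definition pos_roots :: "rtype \<Rightarrow> nat \<Rightarrow> vec set" where
  "pos_roots t n = rvec ` pos_labels t n"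

definition row_set :: "rtype \<Rightarrow> nat \<Rightarrow> int \<Rightarrow> vec set" where
  "row_set t n i = rvec ` {r \<in> pos_labels t n. rrow r = i}"

definition col_set :: "rtype \<Rightarrow> nat \<Rightarrow> nat \<Rightarrow> vec set" where
  "col_set t n j = rvec ` {r \<in> pos_labels t n. rcol r = j}"

definition ip :: "nat \<Rightarrow> vec \<Rightarrow> vec \<Rightarrow> real" where
  "ip n v w = (\<Sum>k\<in>{1..n}. v k * w k)"

definition orthogonal_set :: "nat \<Rightarrow> vec set \<Rightarrow> bool" where
  "orthogonal_set n D \<longleftrightarrow> (\<forall>a\<in>D. \<forall>b\<in>D. a \<noteq> b \<longrightarrow> ip n a b = 0)"

definition refl :: "nat \<Rightarrow> vec \<Rightarrow> vec \<Rightarrow> vec" where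
  "refl n \<beta> v = (\<lambda>k. v k - (2 * ip n v \<beta> / ip n \<beta> \<beta>) * \<beta> k)"

text \<open>Product of the reflections r_beta, beta in D (they commute when D is orthogonal).\<close>
definition refl_prod :: "nat \<Rightarrow> vec set \<Rightarrow> vec \<Rightarrow> vec" where
  "refl_prod n D = Finite_Set.fold (\<lambda>\<beta> f. refl n \<beta> \<circ> f) id D"

definition wlen :: "rtype \<Rightarrow> nat \<Rightarrow> (vec \<Rightarrow> vec) \<Rightarrow> nat" where
  "wlen t n \<sigma> = card {\<alpha> \<in> pos_roots t n. \<sigma> \<alpha> \<in> uminus ` pos_roots t n}"

definition S_set :: "rtype \<Rightarrow> nat \<Rightarrow> vec \<Rightarrow> vec set" where
  "S_set t n \<beta> = {\<alpha> \<in> pos_roots t n. \<beta> - \<alpha> \<in> pos_roots t n}"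

definition tilde_roots :: "rtype \<Rightarrow> nat \<Rightarrow> nat \<Rightarrow> vec set" where
  "tilde_roots t n j = pos_roots t n -
     (col_set t n 1 \<union> col_set t n j \<union> row_set t n (int j) \<union> row_set t n (- int j))"

end

theory Submission
  imports Defs
begin

lemma eps_apply: "eps i k = (if k = i then 1 else 0)" by (simp add: eps_def)

lemma pos_labels_cases:
  assumes "l \<in> pos_labels t n"
  obtains (M) a b where "l = Minus a b" "1 \<le> a" "a < b" "b \<le> n"
   | (P) a b where "l = Plus a b" "1 \<le> a" "a < b" "b \<le> n"
   | (S) a where "l = Short a" "t = TypeB" "1 \<le> a" "a \<le> n"
   | (L) a where "l = Long a" "t = TypeC" "1 \<le> a" "a \<le> n"
  using assms unfolding pos_labels_def by (cases t) auto
lemma finite_pos_labels: "finite (pos_labels t n)"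
proof -
  have "pos_labels t n \<subseteq> (\<lambda>(i,j). Minus i j) ` ({1..n}\<times>{1..n}) \<union> (\<lambda>(i,j). Plus i j) ` ({1..n}\<times>{1..n})
     \<union> Short ` {1..n} \<union> Long ` {1..n}"
  proof
    fix l assume "l \<in> pos_labels t n"
    then show "l \<in> (\<lambda>(i,j). Minus i j) ` ({1..n}\<times>{1..n}) \<union> (\<lambda>(i,j). Plus i j) ` ({1..n}\<times>{1..n})
     \<union> Short ` {1..n} \<union> Long ` {1..n}"
      by (cases rule: pos_labels_cases) force+
  qed
  thus ?thesis by (rule finite_subset) auto
qed

lemma finite_pos: "finite (pos_roots t n)"
  unfolding pos_roots_def using finite_pos_labels by simp

lemma lead:
  assumes "l \<in> pos_labels t n"
  shows "1 \<le> rcol l \<and> rcol l \<le> n \<and> rvec l (rcol l) > 0 \<and> (\<forall>k < rcol l. rvec l k = 0)"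
  using assms by (cases rule: pos_labels_cases) (auto simp: eps_apply)
definition Phall :: "rtype \<Rightarrow> nat \<Rightarrow> vec set" where
  "Phall t n = pos_roots t n \<union> uminus ` pos_roots t n"

lemma pos_not_neg:
  assumes "v \<in> pos_roots t n" shows "v \<notin> uminus ` pos_roots t n"
proof
  assume "v \<in> uminus ` pos_roots t n"
  then obtain l' where l': "l' \<in> pos_labels t n" "v = - rvec l'" unfolding pos_roots_def by auto
  obtain l where l: "l \<in> pos_labels t n" "v = rvec l" using assms unfolding pos_roots_def by auto
  have ee: "rvec l = - rvec l'" using l l' by simp
  have e: "rvec l k = - rvec l' k" for k using fun_cong[OF ee, of k] by simp
  have A: "rvec l (rcol l) > 0" "\<forall>k < rcol l. rvec l k = 0" using lead[OF l(1)] by auto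
  have B: "rvec l' (rcol l') > 0" "\<forall>k < rcol l'. rvec l' k = 0" using lead[OF l'(1)] by auto
  show False
  proof (cases "rcol l" "rcol l'" rule: linorder_cases)
    case less then show ?thesis using A B e[of "rcol l"] by simp
  next
    case equal then show ?thesis using A B e[of "rcol l"] by simp
  next
    case greater then show ?thesis using A B e[of "rcol l'"] by simp
  qed
qed

lemma neg_lead:
  assumes "v \<in> uminus ` pos_roots t n"
  shows "\<exists>m. 1 \<le> m \<and> m \<le> n \<and> (\<forall>k<m. v k = 0) \<and> v m < 0"
proof -
  obtain l' where l': "l' \<in> pos_labels t n" "v = - rvec l'" using assms unfolding pos_roots_def by auto
  show ?thesis using lead[OF l'(1)] l'(2) by (intro exI[of _ "rcol l'"]) auto
qed

lemma NEG:
  assumes "v \<in> Phall t n" "1 \<le> m" "\<forall>k. 1 \<le> k \<and> k < m \<longrightarrow> v k = 0" "v m < 0"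
  shows "v \<in> uminus ` pos_roots t n"
proof (rule ccontr)
  assume "v \<notin> uminus ` pos_roots t n"
  then have "v \<in> pos_roots t n" using assms(1) unfolding Phall_def by auto
  then obtain l where l: "l \<in> pos_labels t n" "v = rvec l" unfolding pos_roots_def by auto
  have A: "1 \<le> rcol l" "v (rcol l) > 0" "\<forall>k < rcol l. v k = 0" using lead[OF l(1)] l(2) by auto
  show False
  proof (cases "rcol l" m rule: linorder_cases)
    case less then show ?thesis using A assms(3) by force
  next
    case equal then show ?thesis using A assms(4) by simp
  next
    case greater then show ?thesis using A assms(4) by simp
  qed
qed
lemma row_nz:
  assumes "l \<in> pos_labels t n" "1 < j" "rrow l = int j \<or> rrow l = - int j"
  shows "rvec l j \<noteq> 0"
  using assms(1) proof (cases rule: pos_labels_cases)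
qed (use assms in \<open>auto simp: eps_apply\<close>)

lemma col_nz:
  assumes "l \<in> pos_labels t n" shows "rvec l (rcol l) \<noteq> 0"
  using lead[OF assms] by simp

lemma tilde_char:
  assumes "1 < j" "j \<le> n"
  shows "tilde_roots t n j = {\<alpha> \<in> pos_roots t n. \<alpha> 1 = 0 \<and> \<alpha> j = 0}"
proof (intro set_eqI iffI)
  fix v assume v: "v \<in> tilde_roots t n j"
  then obtain l where l: "l \<in> pos_labels t n" "v = rvec l" unfolding tilde_roots_def pos_roots_def by auto
  have c: "rcol l \<noteq> 1" "rcol l \<noteq> j" "rrow l \<noteq> int j" "rrow l \<noteq> - int j"
    using v l unfolding tilde_roots_def col_set_def row_set_def by blast+
  have "rvec l 1 = 0 \<and> rvec l j = 0"
    using l(1) proof (cases rule: pos_labels_cases)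
  qed (use c assms in \<open>auto simp: eps_apply\<close>)
  then show "v \<in> {\<alpha> \<in> pos_roots t n. \<alpha> 1 = 0 \<and> \<alpha> j = 0}" using v l unfolding tilde_roots_def by auto
next
  fix v assume v: "v \<in> {\<alpha> \<in> pos_roots t n. \<alpha> 1 = 0 \<and> \<alpha> j = 0}"
  have "v \<notin> col_set t n 1" "v \<notin> col_set t n j" "v \<notin> row_set t n (int j)" "v \<notin> row_set t n (- int j)"
    using v col_nz row_nz[OF _ assms(1)] unfolding col_set_def row_set_def by fastforce+
  then show "v \<in> tilde_roots t n j" using v unfolding tilde_roots_def by auto
qed

lemma pos_1:
  assumes "v \<in> pos_roots t n"
  shows "v 1 \<ge> 0" "v 1 \<noteq> 0 \<Longrightarrow> v \<in> col_set t n 1"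
proof -
  obtain l where l: "l \<in> pos_labels t n" "v = rvec l" using assms unfolding pos_roots_def by auto
  show "v 1 \<ge> 0" using l(1) proof (cases rule: pos_labels_cases)
  qed (use l in \<open>auto simp: eps_apply\<close>)
  assume nz: "v 1 \<noteq> 0"
  from l(1) have "rcol l = 1" proof (cases rule: pos_labels_cases)
  qed (use l nz in \<open>auto simp: eps_apply split: if_splits\<close>)
  then show "v \<in> col_set t n 1" using l unfolding col_set_def by auto
qed
lemma ip_eps: "1 \<le> a \<Longrightarrow> a \<le> n \<Longrightarrow> ip n v (eps a) = v a"
  unfolding ip_def eps_apply by (simp add: if_distrib cong: if_cong)

lemma ip_diff: "ip n v (u - w) = ip n v u - ip n v w"
  unfolding ip_def by (simp add: right_diff_distrib sum_subtractf)
lemma ip_add: "ip n v (u + w) = ip n v u + ip n v w"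
  unfolding ip_def by (simp add: distrib_left sum.distrib)
lemma ip_two: "ip n v (2 * u) = 2 * ip n v u"
  unfolding ip_def by (simp add: sum_distrib_left mult.left_commute)
lemma ip_sym: "ip n u v = ip n v u"
  unfolding ip_def by (simp add: mult.commute)

lemma ip_lin1: "ip n (\<lambda>k. v k - c * y k) x = ip n v x - c * ip n y x"
  by (simp add: ip_def left_diff_distrib sum_subtractf sum_distrib_left mult.assoc)

lemma refl_commute:
  assumes "ip n x y = 0"
  shows "refl n x (refl n y v) = refl n y (refl n x v)"
proof -
  have yx: "ip n y x = 0" using assms ip_sym by metis
  have 1: "ip n (refl n y v) x = ip n v x"
    using yx unfolding refl_def ip_lin1 by simp
  have 2: "ip n (refl n x v) y = ip n v y"
    using assms unfolding refl_def ip_lin1 by simp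
  show ?thesis
    unfolding refl_def[of n x "refl n y v"] refl_def[of n y "refl n x v"] 1 2
    by (simp add: refl_def fun_eq_iff algebra_simps)
qed

definition sperm :: "nat \<Rightarrow> (nat \<Rightarrow> nat) \<Rightarrow> (nat \<Rightarrow> real) \<Rightarrow> vec \<Rightarrow> vec" where
  "sperm n q e v = (\<lambda>k. if 1 \<le> k \<and> k \<le> n then e k * v (q k) else v k)"

definition swp :: "nat \<Rightarrow> nat \<Rightarrow> nat \<Rightarrow> nat" where
  "swp a b k = (if k = a then b else if k = b then a else k)"

lemma sperm_comp:
  assumes "q1 ` {1..n} \<subseteq> {1..n}"
  shows "sperm n q1 e1 \<circ> sperm n q2 e2 = sperm n (q2 \<circ> q1) (\<lambda>k. e1 k * e2 (q1 k))"
proof -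
  have "\<forall>k. 1\<le>k \<and> k\<le>n \<longrightarrow> 1 \<le> q1 k \<and> q1 k \<le> n" using assms by (fastforce simp: image_subset_iff)
  then show ?thesis by (auto simp: sperm_def fun_eq_iff)
qed

lemma sperm_id: "sperm n id (\<lambda>_. 1) = id"
  by (auto simp: sperm_def fun_eq_iff)

lemma refl_Minus:
  assumes "1 \<le> a" "a < b" "b \<le> n"
  shows "refl n (eps a - eps b) = sperm n (swp a b) (\<lambda>_. 1)"
  using assms apply (auto simp: refl_def sperm_def fun_eq_iff ip_diff ip_eps swp_def eps_apply)
  apply (simp_all add: field_simps)
  done

lemma refl_Plus:
  assumes "1 \<le> a" "a < b" "b \<le> n"
  shows "refl n (eps a + eps b) = sperm n (swp a b) (\<lambda>k. if k = a \<or> k = b then -1 else 1)"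
  using assms apply (auto simp: refl_def sperm_def fun_eq_iff ip_add ip_eps swp_def eps_apply)
  apply (simp_all add: field_simps)
  done

lemma refl_Short:
  assumes "1 \<le> a" "a \<le> n"
  shows "refl n (eps a) = sperm n id (\<lambda>k. if k = a then -1 else 1)"
  using assms by (auto simp: refl_def sperm_def fun_eq_iff ip_eps eps_apply)

lemma refl_Long:
  assumes "1 \<le> a" "a \<le> n"
  shows "refl n (2 * eps a) = sperm n id (\<lambda>k. if k = a then -1 else 1)"
  using assms by (auto simp: refl_def sperm_def fun_eq_iff ip_two ip_eps eps_apply)
definition good :: "nat \<Rightarrow> (nat \<Rightarrow> nat) \<Rightarrow> (nat \<Rightarrow> real) \<Rightarrow> bool" where
  "good n q e \<longleftrightarrow> bij_betw q {1..n} {1..n} \<and> (\<forall>k. e k = 1 \<or> e k = -1)"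

lemma bij_swp: "a \<in> {1..n} \<Longrightarrow> b \<in> {1..n} \<Longrightarrow> bij_betw (swp a b) {1..n} {1..n}"
  by (rule bij_betw_byWitness[where f'="swp a b"]) (auto simp: swp_def)

lemma refl_pos:
  assumes "l \<in> pos_labels t n"
  shows "\<exists>q e. refl n (rvec l) = sperm n q e \<and> good n q e \<and> (\<forall>k. rvec l k = 0 \<longrightarrow> q k = k \<and> e k = 1)"
  using assms
proof (cases rule: pos_labels_cases)
  case (M a b)
  then show ?thesis
  proof (intro exI[of _ "swp a b"] exI[of _ "\<lambda>_. 1"] conjI allI impI)
    show "refl n (rvec l) = sperm n (swp a b) (\<lambda>_. 1)" using M refl_Minus by simp
    show "good n (swp a b) (\<lambda>_. 1)" unfolding good_def using M bij_swp by simp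
    fix k assume "rvec l k = 0"
    then show "swp a b k = k" using M by (auto simp: swp_def eps_apply split: if_splits)
  qed simp
next
  case (P a b)
  then show ?thesis
  proof (intro exI[of _ "swp a b"] exI[of _ "\<lambda>k. if k = a \<or> k = b then -1 else 1"] conjI allI impI)
    show "refl n (rvec l) = sperm n (swp a b) (\<lambda>k. if k = a \<or> k = b then -1 else 1)" using P refl_Plus by simp
    show "good n (swp a b) (\<lambda>k. if k = a \<or> k = b then -1 else 1)" unfolding good_def using P bij_swp by simp
    fix k assume "rvec l k = 0"
    then show "swp a b k = k" "(if k = a \<or> k = b then -1 else 1) = (1::real)"
      using P by (auto simp: swp_def eps_apply split: if_splits)
  qed
next
  case (S a)
  then show ?thesis
    by (intro exI[of _ "id"] exI[of _ "\<lambda>k. if k = a then -1 else 1"])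
       (auto simp: refl_Short good_def eps_apply)
next
  case (L a)
  then show ?thesis
    by (intro exI[of _ "id"] exI[of _ "\<lambda>k. if k = a then -1 else 1"])
       (auto simp: refl_Long good_def eps_apply)
qed

lemma good_comp:
  assumes "good n q1 e1" "good n q2 e2"
  shows "sperm n q1 e1 \<circ> sperm n q2 e2 = sperm n (q2 \<circ> q1) (\<lambda>k. e1 k * e2 (q1 k))"
    "good n (q2 \<circ> q1) (\<lambda>k. e1 k * e2 (q1 k))"
proof -
  have b1: "bij_betw q1 {1..n} {1..n}" and b2: "bij_betw q2 {1..n} {1..n}" using assms good_def by auto
  show "sperm n q1 e1 \<circ> sperm n q2 e2 = sperm n (q2 \<circ> q1) (\<lambda>k. e1 k * e2 (q1 k))"
    by (rule sperm_comp) (use b1 bij_betw_imp_surj_on in blast)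
  have "bij_betw (q2 \<circ> q1) {1..n} {1..n}" using b1 b2 bij_betw_trans by blast
  moreover have "\<forall>k. e1 k * e2 (q1 k) = 1 \<or> e1 k * e2 (q1 k) = -1"
  proof
    fix k
    have "e1 k = 1 \<or> e1 k = -1" "e2 (q1 k) = 1 \<or> e2 (q1 k) = -1" using assms good_def by auto
    then show "e1 k * e2 (q1 k) = 1 \<or> e1 k * e2 (q1 k) = -1" by auto
  qed
  ultimately show "good n (q2 \<circ> q1) (\<lambda>k. e1 k * e2 (q1 k))" unfolding good_def by blast
qed

lemma refl_prod_insert:
  assumes "orthogonal_set n D" "insert x F \<subseteq> D" "finite F" "x \<notin> F"
  shows "refl_prod n (insert x F) = refl n x \<circ> refl_prod n F"
proof -
  interpret comp_fun_commute_on D "\<lambda>\<beta> f. refl n \<beta> \<circ> f"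
  proof
    fix x y assume xy: "x \<in> D" "y \<in> D"
    have "refl n y \<circ> refl n x = refl n x \<circ> refl n y"
    proof (cases "x = y")
      case False
      then have "ip n y x = 0" using assms(1) xy unfolding orthogonal_set_def by auto
      then show ?thesis using refl_commute by (auto simp: fun_eq_iff)
    qed simp
    then show "(\<lambda>f. refl n y \<circ> f) \<circ> (\<lambda>f. refl n x \<circ> f) = (\<lambda>f. refl n x \<circ> f) \<circ> (\<lambda>f. refl n y \<circ> f)"
      by (simp add: fun_eq_iff comp_assoc)
  qed
  show ?thesis unfolding refl_prod_def by (rule fold_insert[OF assms(2-4)])
qed

lemma refl_prod_good:
  assumes "orthogonal_set n D" "D \<subseteq> pos_roots t n" "finite F" "F \<subseteq> D"
  shows "\<exists>q e. refl_prod n F = sperm n q e \<and> good n q e \<and> (\<forall>k. (\<forall>\<gamma>\<in>F. \<gamma> k = 0) \<longrightarrow> q k = k \<and> e k = 1)"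
  using assms(3,4)
proof (induction F rule: finite_induct)
  case empty
  have "good n id (\<lambda>_. 1)" by (simp add: good_def)
  moreover have "refl_prod n {} = sperm n id (\<lambda>_. 1)" by (simp add: refl_prod_def sperm_id)
  ultimately show ?case by (intro exI[of _ id] exI[of _ "\<lambda>_. 1"]) (simp add: id_def)
next
  case (insert x F)
  obtain q e where qe: "refl_prod n F = sperm n q e" "good n q e" "\<forall>k. (\<forall>\<gamma>\<in>F. \<gamma> k = 0) \<longrightarrow> q k = k \<and> e k = 1"
    using insert by auto
  obtain l where l: "l \<in> pos_labels t n" "x = rvec l" using insert(4) assms(2) unfolding pos_roots_def by auto
  obtain q1 e1 where q1: "refl n x = sperm n q1 e1" "good n q1 e1" "\<forall>k. x k = 0 \<longrightarrow> q1 k = k \<and> e1 k = 1"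
    using refl_pos[OF l(1)] l(2) by auto
  have "refl_prod n (insert x F) = refl n x \<circ> refl_prod n F"
    by (rule refl_prod_insert[OF assms(1) insert(4,1,2)])
  also have "\<dots> = sperm n (q \<circ> q1) (\<lambda>k. e1 k * e (q1 k))"
    unfolding q1(1) qe(1) by (rule good_comp(1)[OF q1(2) qe(2)])
  finally show ?case using good_comp(2)[OF q1(2) qe(2)] q1(3) qe(3)
    by (intro exI[of _ "q \<circ> q1"] exI[of _ "\<lambda>k. e1 k * e (q1 k)"]) (auto simp: comp_def)
qed

lemma Minus_in: "1 \<le> a \<Longrightarrow> a < b \<Longrightarrow> b \<le> n \<Longrightarrow> eps a - eps b \<in> pos_roots t n"
  unfolding pos_roots_def pos_labels_def by (rule image_eqI[of _ _ "Minus a b"]) auto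
lemma Plus_in: "1 \<le> a \<Longrightarrow> a < b \<Longrightarrow> b \<le> n \<Longrightarrow> eps a + eps b \<in> pos_roots t n"
  unfolding pos_roots_def pos_labels_def by (rule image_eqI[of _ _ "Plus a b"]) auto
lemma Short_in: "1 \<le> a \<Longrightarrow> a \<le> n \<Longrightarrow> eps a \<in> pos_roots TypeB n"
  unfolding pos_roots_def pos_labels_def by (rule image_eqI[of _ _ "Short a"]) auto
lemma Long_in: "1 \<le> a \<Longrightarrow> a \<le> n \<Longrightarrow> 2 * eps a \<in> pos_roots TypeC n"
  unfolding pos_roots_def pos_labels_def by (rule image_eqI[of _ _ "Long a"]) auto

lemma Phall_pos: "v \<in> pos_roots t n \<Longrightarrow> v \<in> Phall t n" unfolding Phall_def by auto
lemma Phall_neg: "v \<in> pos_roots t n \<Longrightarrow> w = - v \<Longrightarrow> w \<in> Phall t n" unfolding Phall_def by auto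

lemma PM_lt:
  assumes "1 \<le> x" "x < y" "y \<le> n" "s = 1 \<or> s = -1" "s' = 1 \<or> s' = -1"
  shows "(\<lambda>i. s * eps x i + s' * eps y i) \<in> Phall t n"
proof -
  have m: "eps x - eps y \<in> pos_roots t n" and p: "eps x + eps y \<in> pos_roots t n"
    using assms Minus_in Plus_in by auto
  consider "s = 1" "s' = 1" | "s = 1" "s' = -1" | "s = -1" "s' = 1" | "s = -1" "s' = -1" using assms by auto
  then show ?thesis
  proof cases
    case 1 then show ?thesis using Phall_pos[OF p] by (simp add: plus_fun_def)
  next
    case 2 then show ?thesis using Phall_pos[OF m] by (simp add: fun_diff_def)
  next
    case 3 then show ?thesis by (intro Phall_neg[OF m]) (auto simp: fun_eq_iff)
  next
    case 4 then show ?thesis by (intro Phall_neg[OF p]) (auto simp: fun_eq_iff)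
  qed
qed

lemma PM:
  assumes "x \<in> {1..n}" "y \<in> {1..n}" "x \<noteq> y" "s = 1 \<or> s = -1" "s' = 1 \<or> s' = -1"
  shows "(\<lambda>i. s * eps x i + s' * eps y i) \<in> Phall t n"
proof (cases "x < y")
  case True then show ?thesis using PM_lt assms by auto
next
  case False
  then have "(\<lambda>i. s' * eps y i + s * eps x i) \<in> Phall t n" using PM_lt assms by auto
  then show ?thesis by (simp add: add.commute)
qed

lemma sperm_eps:
  assumes "bij_betw q {1..n} {1..n}" "a \<in> {1..n}"
  shows "\<exists>k\<in>{1..n}. q k = a \<and> sperm n q e (eps a) = (\<lambda>i. e k * eps k i)"
proof -
  obtain k where k: "k \<in> {1..n}" "q k = a" using assms bij_betw_imp_surj_on by (metis imageE)
  have inj: "inj_on q {1..n}" using assms bij_betw_def by auto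
  have "sperm n q e (eps a) = (\<lambda>i. e k * eps k i)"
  proof
    fix i show "sperm n q e (eps a) i = e k * eps k i"
    proof (cases "i \<in> {1..n}")
      case True
      then have "(q i = a) = (i = k)" using inj k inj_on_eq_iff by metis
      then show ?thesis using True by (auto simp: sperm_def eps_apply)
    next
      case False
      then show ?thesis using k assms(2) by (auto simp: sperm_def eps_apply)
    qed
  qed
  then show ?thesis using k by auto
qed

lemma sperm_diff: "sperm n q e (u - w) = sperm n q e u - sperm n q e w"
  by (auto simp: sperm_def fun_eq_iff algebra_simps)
lemma sperm_add: "sperm n q e (u + w) = sperm n q e u + sperm n q e w"
  by (auto simp: sperm_def fun_eq_iff algebra_simps)
lemma sperm_two: "sperm n q e (2 * u) = 2 * sperm n q e u"
  by (auto simp: sperm_def fun_eq_iff algebra_simps)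

lemma sperm_inv:
  assumes "good n q e" "v \<in> pos_roots t n"
  shows "sperm n q e v \<in> Phall t n"
proof -
  have bij: "bij_betw q {1..n} {1..n}" and sg: "\<And>k. e k = 1 \<or> e k = -1" using assms(1) good_def by auto
  have inj: "inj_on q {1..n}" using bij bij_betw_def by auto
  obtain l where l: "l \<in> pos_labels t n" "v = rvec l" using assms(2) unfolding pos_roots_def by auto
  from l(1) show ?thesis
  proof (cases rule: pos_labels_cases)
    case (M a b)
    obtain k where k: "k \<in> {1..n}" "q k = a" "sperm n q e (eps a) = (\<lambda>i. e k * eps k i)"
      using sperm_eps[OF bij, of a e] M by auto
    obtain k' where k': "k' \<in> {1..n}" "q k' = b" "sperm n q e (eps b) = (\<lambda>i. e k' * eps k' i)"
      using sperm_eps[OF bij, of b e] M by auto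
    have kk: "k \<noteq> k'" using k k' M by auto
    have "- e k' = 1 \<or> - e k' = -1" using sg[of k'] by auto
    then have "(\<lambda>i. e k * eps k i + (- e k') * eps k' i) \<in> Phall t n"
      using PM[OF k(1) k'(1) kk sg[of k]] by blast
    moreover have "sperm n q e v = (\<lambda>i. e k * eps k i) - (\<lambda>i. e k' * eps k' i)"
      using M l k k' by (simp add: sperm_diff)
    ultimately show ?thesis by (simp add: fun_diff_def)
  next
    case (P a b)
    obtain k where k: "k \<in> {1..n}" "q k = a" "sperm n q e (eps a) = (\<lambda>i. e k * eps k i)"
      using sperm_eps[OF bij, of a e] P by auto
    obtain k' where k': "k' \<in> {1..n}" "q k' = b" "sperm n q e (eps b) = (\<lambda>i. e k' * eps k' i)"
      using sperm_eps[OF bij, of b e] P by auto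
    have kk: "k \<noteq> k'" using k k' P by auto
    have "(\<lambda>i. e k * eps k i + e k' * eps k' i) \<in> Phall t n"
      using PM[OF k(1) k'(1) kk sg[of k] sg[of k']] by blast
    moreover have "sperm n q e v = (\<lambda>i. e k * eps k i) + (\<lambda>i. e k' * eps k' i)"
      using P l k k' by (simp add: sperm_add)
    ultimately show ?thesis by (simp add: plus_fun_def)
  next
    case (S a)
    obtain k where k: "k \<in> {1..n}" "q k = a" "sperm n q e (eps a) = (\<lambda>i. e k * eps k i)"
      using sperm_eps[OF bij, of a e] S by auto
    have s: "eps k \<in> pos_roots t n" using Short_in k S by auto
    have sv: "sperm n q e v = (\<lambda>i. e k * eps k i)" using S l k by simp
    show ?thesis
    proof (cases "e k = 1")
      case True then show ?thesis using Phall_pos[OF s] sv by simp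
    next
      case False then have "e k = -1" using sg by auto
      then show ?thesis unfolding sv by (intro Phall_neg[OF s]) (auto simp: fun_eq_iff)
    qed
  next
    case (L a)
    obtain k where k: "k \<in> {1..n}" "q k = a" "sperm n q e (eps a) = (\<lambda>i. e k * eps k i)"
      using sperm_eps[OF bij, of a e] L by auto
    have s: "2 * eps k \<in> pos_roots t n" using Long_in k L by auto
    have sv: "sperm n q e v = 2 * (\<lambda>i. e k * eps k i)" using L l k by (simp add: sperm_two)
    show ?thesis
    proof (cases "e k = 1")
      case True
      then have "sperm n q e v = 2 * eps k" using sv by (simp add: fun_eq_iff)
      then show ?thesis using Phall_pos[OF s] by simp
    next
      case False then have "e k = -1" using sg by auto
      then show ?thesis unfolding sv by (intro Phall_neg[OF s]) (auto simp: fun_eq_iff)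
    qed
  qed
qed

lemma sum_eps: "1 \<le> a \<Longrightarrow> a \<le> n \<Longrightarrow> (\<Sum>k\<in>{1..n}. eps a k) = 1"
  unfolding eps_apply by simp
lemma sum_eps': "1 \<le> a \<Longrightarrow> a \<le> n \<Longrightarrow> sum (eps a) {Suc 0..n} = 1"
  using sum_eps[of a n] by simp

lemma hsum_pos:
  assumes "v \<in> pos_roots t n"
  shows "(\<Sum>k\<in>{1..n}. v k) \<ge> 0"
    "(\<Sum>k\<in>{1..n}. v k) = 0 \<Longrightarrow> \<exists>a b. 1 \<le> a \<and> a < b \<and> b \<le> n \<and> v = eps a - eps b"
proof -
  obtain l where l: "l \<in> pos_labels t n" "v = rvec l" using assms unfolding pos_roots_def by auto
  show "(\<Sum>k\<in>{1..n}. v k) \<ge> 0"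
    using l(1) proof (cases rule: pos_labels_cases)
  qed (use l in \<open>auto simp: sum_eps sum_eps' sum_subtractf sum.distrib sum_distrib_left[symmetric]\<close>)
  assume z: "(\<Sum>k\<in>{1..n}. v k) = 0"
  from l(1) show "\<exists>a b. 1 \<le> a \<and> a < b \<and> b \<le> n \<and> v = eps a - eps b"
  proof (cases rule: pos_labels_cases)
  qed (use l z in \<open>auto simp: sum_eps sum_eps' sum_subtractf sum.distrib sum_distrib_left[symmetric]\<close>)
qed

lemma S_solve:
  assumes "eps 1 - eps j - (eps a - eps b) = eps c - eps d" "1 \<le> a" "a < b" "b \<le> n" "1 \<le> c" "c < d" "d \<le> n" "1 < j"
  shows "(a = 1 \<and> b < j) \<or> (1 < a \<and> b = j)"
proof -
  have h: "\<And>k. eps 1 k - eps j k - (eps a k - eps b k) = eps c k - eps d k"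
    using fun_cong[OF assms(1)] by simp
  show ?thesis using h[of 1] h[of j] h[of a] h[of b] h[of c] h[of d] assms(2-8)
    by (auto simp: eps_apply split: if_splits)
qed

lemma L_j:
  assumes "v \<in> pos_roots t n" "v j < 0"
  shows "\<exists>a. 1 \<le> a \<and> a < j \<and> v = eps a - eps j"
proof -
  obtain l where l: "l \<in> pos_labels t n" "v = rvec l" using assms unfolding pos_roots_def by auto
  from l(1) show ?thesis
  proof (cases rule: pos_labels_cases)
  qed (use l assms(2) in \<open>auto simp: eps_apply split: if_splits\<close>)
qed

lemma L_1:
  assumes "v \<in> pos_roots t n" "v 1 \<noteq> 0" "v b \<noteq> 0" "b \<noteq> 1"
  shows "v = (\<lambda>i. eps 1 i + v b * eps b i) \<and> (v b = 1 \<or> v b = -1)"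
proof -
  obtain l where l: "l \<in> pos_labels t n" "v = rvec l" using assms unfolding pos_roots_def by auto
  from l(1) show ?thesis
  proof (cases rule: pos_labels_cases)
  qed (use l assms(2-4) in \<open>auto simp: eps_apply fun_eq_iff split: if_splits\<close>)
qed

lemma eps_inj: assumes "eps a = eps b" shows "a = b"
proof -
  have "eps a a = eps b a" using assms by simp
  then show ?thesis by (simp add: eps_apply split: if_splits)
qed

lemma card_S:
  assumes "1 < j" "j \<le> n"
  shows "card (S_set t n (eps 1 - eps j)) = 2 * (j - 2)"
proof -
  define A3 where "A3 = (\<lambda>b. eps 1 - eps b) ` {2..<j}"
  define A4 where "A4 = (\<lambda>a. eps a - eps j) ` {2..<j}"
  have "S_set t n (eps 1 - eps j) \<subseteq> A3 \<union> A4"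
  proof
    fix v assume v: "v \<in> S_set t n (eps 1 - eps j)"
    then have p1: "v \<in> pos_roots t n" and p2: "eps 1 - eps j - v \<in> pos_roots t n" unfolding S_set_def by auto
    have hb: "(\<Sum>k\<in>{1..n}. (eps 1 - eps j) k) = 0" using assms by (simp add: sum_subtractf sum_eps')
    have hd: "(\<Sum>k\<in>{1..n}. (eps 1 - eps j - v) k) = (\<Sum>k\<in>{1..n}. (eps 1 - eps j) k) - (\<Sum>k\<in>{1..n}. v k)"
      by (simp add: sum_subtractf)
    have h1: "(\<Sum>k\<in>{1..n}. v k) = 0" using hsum_pos(1)[OF p1] hsum_pos(1)[OF p2] hb hd by linarith
    have h2: "(\<Sum>k\<in>{1..n}. (eps 1 - eps j - v) k) = 0" using h1 hb hd by linarith
    obtain a b where ab: "1 \<le> a" "a < b" "b \<le> n" "v = eps a - eps b" using hsum_pos(2)[OF p1 h1] by blast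
    obtain c d where cd: "1 \<le> c" "c < d" "d \<le> n" "eps 1 - eps j - v = eps c - eps d" using hsum_pos(2)[OF p2 h2] by blast
    have "(a = 1 \<and> b < j) \<or> (1 < a \<and> b = j)"
      by (rule S_solve[OF _ ab(1-3) cd(1-3) assms(1)]) (use ab cd in simp)
    then show "v \<in> A3 \<union> A4" unfolding A3_def A4_def using ab by auto
  qed
  moreover have "A3 \<union> A4 \<subseteq> S_set t n (eps 1 - eps j)"
  proof
    fix v assume "v \<in> A3 \<union> A4"
    then show "v \<in> S_set t n (eps 1 - eps j)"
    proof
      assume "v \<in> A3"
      then obtain b where b: "b \<in> {2..<j}" "v = eps 1 - eps b" unfolding A3_def by auto
      have "eps 1 - eps j - v = eps b - eps j" using b by (simp add: algebra_simps)
      then show ?thesis using b assms Minus_in[of 1 b n t] Minus_in[of b j n t] unfolding S_set_def by auto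
    next
      assume "v \<in> A4"
      then obtain a where a: "a \<in> {2..<j}" "v = eps a - eps j" unfolding A4_def by auto
      have "eps 1 - eps j - v = eps 1 - eps a" using a by (simp add: algebra_simps)
      then show ?thesis using a assms Minus_in[of 1 a n t] Minus_in[of a j n t] unfolding S_set_def by auto
    qed
  qed
  ultimately have S: "S_set t n (eps 1 - eps j) = A3 \<union> A4" by blast
  have i3: "inj_on (\<lambda>b. eps 1 - eps b) {2..<j}" by (auto intro!: inj_onI dest: eps_inj)
  have i4: "inj_on (\<lambda>a. eps a - eps j) {2..<j}" by (auto intro!: inj_onI dest: eps_inj)
  have c3: "card A3 = j - 2" unfolding A3_def using card_image[OF i3] by simp
  have c4: "card A4 = j - 2" unfolding A4_def using card_image[OF i4] by simp
  have disj: "A3 \<inter> A4 = {}"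
  proof (rule ccontr)
    assume "A3 \<inter> A4 \<noteq> {}"
    then obtain a b where ab: "a \<in> {2..<j}" "b \<in> {2..<j}" "eps 1 - eps b = eps a - eps j"
      unfolding A3_def A4_def by (auto simp del: atLeastLessThan_iff)
    then have "(eps 1 - eps b) 1 = (eps a - eps j) 1" by simp
    then show False using ab assms by (auto simp: eps_apply split: if_splits)
  qed
  have "card (A3 \<union> A4) = card A3 + card A4"
    by (rule card_Un_disjoint) (use disj in \<open>auto simp: A3_def A4_def\<close>)
  then show ?thesis using S c3 c4 by simp
qed

lemma card_E:
  assumes j: "1 < j" "j \<le> n" and g: "good n q e" "q 1 = 1" "q j = j" "e 1 = 1" "e j = 1"
    and sig: "\<sigma> = refl n (eps 1 - eps j) \<circ> sperm n q e"
  shows "card {\<alpha> \<in> pos_roots t n. (\<alpha> 1 \<noteq> 0 \<or> \<alpha> j \<noteq> 0) \<and> \<sigma> \<alpha> \<in> uminus ` pos_roots t n} = 2 * j - 3"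
proof -
  have bij: "bij_betw q {1..n} {1..n}" and sg: "\<And>k. e k = 1 \<or> e k = -1" using g good_def by auto
  have inj: "inj_on q {1..n}" using bij bij_betw_def by auto
  have qR: "\<And>k. k \<in> {1..n} \<Longrightarrow> q k \<in> {1..n}" using bij bij_betw_imp_surj_on by blast
  have q1: "\<And>k. k \<in> {1..n} \<Longrightarrow> k \<noteq> 1 \<Longrightarrow> q k \<noteq> 1" using inj g(2) j by (metis atLeastAtMost_iff inj_on_eq_iff le_refl order.trans less_imp_le)
  have qj: "\<And>k. k \<in> {1..n} \<Longrightarrow> k \<noteq> j \<Longrightarrow> q k \<noteq> j" using inj g(3) j by (metis atLeastAtMost_iff inj_on_eq_iff less_imp_le)
  have gs: "good n (swp 1 j) (\<lambda>_. 1)" unfolding good_def using bij_swp[of 1 n j] j by simp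
  have rb: "refl n (eps 1 - eps j) = sperm n (swp 1 j) (\<lambda>_. 1)" using refl_Minus[of 1 j n] j by simp
  have sv: "\<sigma> v = sperm n (swp 1 j) (\<lambda>_. 1) (sperm n q e v)" for v using sig rb by simp
  have s1: "\<sigma> v 1 = v j" for v using sv[of v] j g by (simp add: sperm_def swp_def)
  have sj: "\<sigma> v j = v 1" for v using sv[of v] j g by (simp add: sperm_def swp_def)
  have sk: "\<sigma> v k = e k * v (q k)" if "k \<in> {1..n}" "k \<noteq> 1" "k \<noteq> j" for v k
    using sv[of v] that by (simp add: sperm_def swp_def)
  have sP: "\<sigma> v \<in> Phall t n" if "v \<in> pos_roots t n" for v
  proof -
    have "\<sigma> = sperm n (q \<circ> swp 1 j) (\<lambda>k. 1 * e (swp 1 j k))"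
      using sig rb good_comp(1)[OF gs g(1)] by simp
    then show ?thesis using sperm_inv[OF good_comp(2)[OF gs g(1)] that] by simp
  qed
  define B where "B = {\<alpha> \<in> pos_roots t n. (\<alpha> 1 \<noteq> 0 \<or> \<alpha> j \<noteq> 0) \<and> \<sigma> \<alpha> \<in> uminus ` pos_roots t n}"
  define A1 where "A1 = (\<lambda>a. eps a - eps j) ` {1..<j}"
  define A2 where "A2 = (\<lambda>k. (\<lambda>i. eps 1 i - e k * eps (q k) i)) ` {2..<j}"
  have "B \<subseteq> A1 \<union> A2"
  proof
    fix v assume "v \<in> B"
    then have v: "v \<in> pos_roots t n" "v 1 \<noteq> 0 \<or> v j \<noteq> 0" "\<sigma> v \<in> uminus ` pos_roots t n" unfolding B_def by auto
    obtain m where m: "1 \<le> m" "m \<le> n" "\<forall>k<m. \<sigma> v k = 0" "\<sigma> v m < 0" using neg_lead[OF v(3)] by blast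
    consider "v j < 0" | "v j > 0" | "v j = 0" by linarith
    then show "v \<in> A1 \<union> A2"
    proof cases
      case 1
      then obtain a where "1 \<le> a" "a < j" "v = eps a - eps j" using L_j[OF v(1)] by blast
      then show ?thesis unfolding A1_def by auto
    next
      case 2
      then show ?thesis using m s1[of v] by (cases "m = 1") auto
    next
      case 3
      have v1: "v 1 > 0" using v(2) 3 pos_1(1)[OF v(1)] by auto
      have "m \<noteq> j" using m(4) sj[of v] v1 by auto
      moreover have "\<not> m > j" using m(3) sj[of v] v1 by auto
      moreover have "m \<noteq> 1" using m(4) s1[of v] 3 by auto
      ultimately have mm: "1 < m" "m < j" using m(1) by auto
      have mR: "m \<in> {1..n}" using mm j by auto
      have neg: "e m * v (q m) < 0" using sk[OF mR] mm m(4) by auto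
      then have vq: "v (q m) \<noteq> 0" by auto
      have qm1: "q m \<noteq> 1" using q1[OF mR] mm by auto
      from L_1[OF v(1) _ vq qm1] v1
      have L: "v = (\<lambda>i. eps 1 i + v (q m) * eps (q m) i)" "v (q m) = 1 \<or> v (q m) = -1" by auto
      have "v (q m) = - e m" using L(2) sg[of m] neg by auto
      then have "v = (\<lambda>i. eps 1 i - e m * eps (q m) i)" using L(1) by simp
      then show ?thesis unfolding A2_def using mm by auto
    qed
  qed
  moreover have "A1 \<union> A2 \<subseteq> B"
  proof
    fix v assume "v \<in> A1 \<union> A2"
    then show "v \<in> B"
    proof
      assume "v \<in> A1"
      then obtain a where a: "1 \<le> a" "a < j" "v = eps a - eps j" unfolding A1_def by auto
      have vp: "v \<in> pos_roots t n" using Minus_in[of a j n t] a j by simp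
      have "v j = -1" using a by (simp add: eps_apply)
      moreover have "\<sigma> v \<in> uminus ` pos_roots t n"
        by (rule NEG[OF sP[OF vp], of 1]) (use s1[of v] a in \<open>auto simp: eps_apply\<close>)
      ultimately show ?thesis unfolding B_def using vp by auto
    next
      assume "v \<in> A2"
      then obtain k where k: "2 \<le> k" "k < j" "v = (\<lambda>i. eps 1 i - e k * eps (q k) i)" unfolding A2_def by auto
      have kR: "k \<in> {1..n}" using k j by auto
      have qk: "q k \<in> {1..n}" "q k \<noteq> 1" "q k \<noteq> j" using qR[OF kR] q1[OF kR] qj[OF kR] k by auto
      have vp: "v \<in> pos_roots t n"
      proof (cases "e k = 1")
        case True
        then have "v = eps 1 - eps (q k)" using k by (simp add: fun_eq_iff)
        then show ?thesis using Minus_in[of 1 "q k" n t] qk by simp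
      next
        case False
        then have "e k = -1" using sg by auto
        then have "v = eps 1 + eps (q k)" using k by (simp add: fun_eq_iff)
        then show ?thesis using Plus_in[of 1 "q k" n t] qk by simp
      qed
      have v1: "v 1 = 1" using k qk by (simp add: eps_apply)
      have "\<sigma> v \<in> uminus ` pos_roots t n"
      proof (rule NEG[OF sP[OF vp], of k])
        show "1 \<le> k" using k by simp
        show "\<forall>i. 1 \<le> i \<and> i < k \<longrightarrow> \<sigma> v i = 0"
        proof (intro allI impI)
          fix i assume i: "1 \<le> i \<and> i < k"
          show "\<sigma> v i = 0"
          proof (cases "i = 1")
            case True then show ?thesis using s1[of v] k qk by (simp add: eps_apply)
          next
            case False
            have iR: "i \<in> {1..n}" using i k j by auto
            have "q i \<noteq> q k" using inj iR kR i inj_on_eq_iff by fastforce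
            moreover have "q i \<noteq> 1" using q1[OF iR] False by simp
            ultimately show ?thesis using sk[OF iR False] i k by (simp add: eps_apply)
          qed
        qed
        have "e k * e k = 1" using sg[of k] by auto
        then show "\<sigma> v k < 0" using sk[OF kR] k qk by (simp add: eps_apply)
      qed
      then show ?thesis unfolding B_def using vp v1 by auto
    qed
  qed
  ultimately have BA: "B = A1 \<union> A2" by blast
  have i1: "inj_on (\<lambda>a. eps a - eps j) {1..<j}" by (auto intro!: inj_onI dest: eps_inj)
  have i2: "inj_on (\<lambda>k. (\<lambda>i. eps 1 i - e k * eps (q k) i)) {2..<j}"
  proof (rule inj_onI)
    fix a b assume ab: "a \<in> {2..<j}" "b \<in> {2..<j}" "(\<lambda>i. eps 1 i - e a * eps (q a) i) = (\<lambda>i. eps 1 i - e b * eps (q b) i)"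
    have aR: "a \<in> {1..n}" and bR: "b \<in> {1..n}" using ab j by auto
    have "eps 1 (q a) - e a * eps (q a) (q a) = eps 1 (q a) - e b * eps (q b) (q a)" using fun_cong[OF ab(3)] by simp
    then have "e a = e b * eps (q b) (q a)" using q1[OF aR] ab by (simp add: eps_apply)
    then have "q a = q b" using sg[of a] by (auto simp: eps_apply split: if_splits)
    then show "a = b" using inj aR bR inj_on_eq_iff by metis
  qed
  have c1: "card A1 = j - 1" unfolding A1_def using card_image[OF i1] by simp
  have c2: "card A2 = j - 2" unfolding A2_def using card_image[OF i2] by simp
  have disj: "A1 \<inter> A2 = {}"
  proof (rule ccontr)
    assume "A1 \<inter> A2 \<noteq> {}"
    then obtain a k where ak: "a \<in> {1..<j}" "k \<in> {2..<j}" "eps a - eps j = (\<lambda>i. eps 1 i - e k * eps (q k) i)"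
      unfolding A1_def A2_def by (auto simp del: atLeastLessThan_iff)
    have h: "(eps a - eps j) j = eps 1 j - e k * eps (q k) j" using fun_cong[OF ak(3), of j] by simp
    have "q k \<noteq> j" using qj[of k] ak j by auto
    then have "eps 1 j - e k * eps (q k) j = 0" using j by (simp add: eps_apply)
    moreover have "(eps a - eps j) j = -1" using ak(1) by (simp add: eps_apply)
    ultimately show False using h by simp
  qed
  have "card (A1 \<union> A2) = card A1 + card A2"
    by (rule card_Un_disjoint) (use disj in \<open>auto simp: A1_def A2_def\<close>)
  then show ?thesis using BA c1 c2 j unfolding B_def by simp
qed

theorem lemma3p2:
  fixes t :: rtype and n j :: nat and D :: "vec set"
  assumes "D \<subseteq> pos_roots t n"
    and "orthogonal_set n D"
    and "1 < j" and "j \<le> n"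
    and "D \<inter> col_set t n 1 = {eps 1 - eps j}"
  shows "wlen t n (refl_prod n D)
       = card {\<alpha> \<in> tilde_roots t n j.
                 refl_prod n (D \<inter> tilde_roots t n j) \<alpha> \<notin> tilde_roots t n j}
         + card (S_set t n (eps 1 - eps j)) + 1"
proof -
  note j = assms(3,4)
  define \<beta> where "\<beta> = eps 1 - eps j"
  define T where "T = tilde_roots t n j"
  define Dt where "Dt = D \<inter> T"
  have Tc: "T = {\<alpha> \<in> pos_roots t n. \<alpha> 1 = 0 \<and> \<alpha> j = 0}" unfolding T_def using tilde_char[OF j] .
  have finD: "finite D" using assms(1) finite_pos finite_subset by blast
  have bD: "\<beta> \<in> D" using assms(5) unfolding \<beta>_def by auto
  have b1: "\<beta> 1 = 1" "\<beta> j = -1" using j unfolding \<beta>_def by (auto simp: eps_apply)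
  have bT: "\<beta> \<notin> Dt" using b1 Tc Dt_def by auto
  have DT: "d \<in> T" if "d \<in> D" "d \<noteq> \<beta>" for d
  proof -
    have dp: "d \<in> pos_roots t n" using that assms(1) by auto
    have d1: "d 1 = 0"
    proof (rule ccontr)
      assume "d 1 \<noteq> 0"
      then have "d \<in> col_set t n 1" using pos_1(2)[OF dp] by auto
      then show False using that assms(5) unfolding \<beta>_def by auto
    qed
    have "ip n d \<beta> = 0" using assms(2) that bD unfolding orthogonal_set_def by auto
    moreover have "ip n d \<beta> = d 1 - d j" unfolding \<beta>_def using j by (simp add: ip_diff ip_eps)
    ultimately have "d j = 0" using d1 by simp
    then show ?thesis using Tc dp d1 by auto
  qed
  have Dins: "D = insert \<beta> Dt" using DT bD unfolding Dt_def by auto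
  have finDt: "finite Dt" using finD Dt_def by auto
  obtain q e where qe: "refl_prod n Dt = sperm n q e" "good n q e"
      "\<forall>k. (\<forall>\<gamma>\<in>Dt. \<gamma> k = 0) \<longrightarrow> q k = k \<and> e k = 1"
    using refl_prod_good[OF assms(2,1) finDt] Dt_def by auto
  have fix1: "q 1 = 1" "e 1 = 1" "q j = j" "e j = 1" using qe(3) Tc unfolding Dt_def by auto
  define g where "g = sperm n q e"
  have sig: "refl_prod n D = refl n \<beta> \<circ> g"
    using refl_prod_insert[OF assms(2) _ finDt bT] Dins unfolding g_def qe(1)[symmetric] by simp
  define \<sigma> where "\<sigma> = refl_prod n D"
  have rb: "refl n \<beta> = sperm n (swp 1 j) (\<lambda>_. 1)" using refl_Minus[of 1 j n] j unfolding \<beta>_def by simp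
  have g1: "g v 1 = v 1" "g v j = v j" for v using fix1 j unfolding g_def sperm_def by auto
  have sT: "\<sigma> v = g v" if "v 1 = 0" "v j = 0" for v
    unfolding \<sigma>_def sig comp_def rb using that g1[of v] j by (auto simp: sperm_def swp_def fun_eq_iff)
  define A where "A = {\<alpha> \<in> T. g \<alpha> \<notin> T}"
  define B where "B = {\<alpha> \<in> pos_roots t n. (\<alpha> 1 \<noteq> 0 \<or> \<alpha> j \<noteq> 0) \<and> \<sigma> \<alpha> \<in> uminus ` pos_roots t n}"
  have split: "{\<alpha> \<in> pos_roots t n. \<sigma> \<alpha> \<in> uminus ` pos_roots t n} = A \<union> B"
  proof (intro set_eqI iffI)
    fix v assume v: "v \<in> {\<alpha> \<in> pos_roots t n. \<sigma> \<alpha> \<in> uminus ` pos_roots t n}"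
    show "v \<in> A \<union> B"
    proof (cases "v 1 = 0 \<and> v j = 0")
      case True
      then have vT: "v \<in> T" using v Tc by auto
      have "g v \<notin> T" using v sT[of v] True Tc pos_not_neg by auto
      then show ?thesis using vT A_def by auto
    next
      case False then show ?thesis using v B_def by auto
    qed
  next
    fix v assume "v \<in> A \<union> B"
    then show "v \<in> {\<alpha> \<in> pos_roots t n. \<sigma> \<alpha> \<in> uminus ` pos_roots t n}"
    proof
      assume "v \<in> A"
      then have vT: "v \<in> T" and gv: "g v \<notin> T" unfolding A_def by auto
      have vp: "v \<in> pos_roots t n" and v0: "v 1 = 0" "v j = 0" using vT Tc by auto
      have "g v \<in> Phall t n" using sperm_inv[OF qe(2) vp] g_def by simp
      moreover have "g v \<notin> pos_roots t n" using gv Tc g1[of v] v0 by auto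
      ultimately have "g v \<in> uminus ` pos_roots t n" unfolding Phall_def by auto
      then show ?thesis using vp sT[OF v0] by auto
    next
      assume "v \<in> B" then show ?thesis unfolding B_def by auto
    qed
  qed
  have disj: "A \<inter> B = {}" unfolding A_def B_def using Tc by auto
  have finA: "finite A" unfolding A_def Tc using finite_pos by auto
  have finB: "finite B" unfolding B_def using finite_pos by auto
  have cB: "card B = 2 * j - 3"
    unfolding B_def by (rule card_E[OF j qe(2) fix1(1) fix1(3) fix1(2) fix1(4)]) (simp add: \<sigma>_def sig g_def \<beta>_def comp_def)
  have cS: "card (S_set t n (eps 1 - eps j)) = 2 * (j - 2)" using card_S[OF j] .
  have "wlen t n (refl_prod n D) = card A + card B"
    unfolding wlen_def \<sigma>_def[symmetric] split using card_Un_disjoint[OF finA finB disj] .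
  moreover have "A = {\<alpha> \<in> tilde_roots t n j. refl_prod n (D \<inter> tilde_roots t n j) \<alpha> \<notin> tilde_roots t n j}"
    unfolding A_def T_def g_def qe(1)[symmetric] Dt_def ..
  ultimately show ?thesis using cB cS j by simp
qed
end
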